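(* Consider a one-parameter quantum channel on $\mathbb{C}^d$ with a fixed pure input state $\rho_0=|\psi_0\rangle\langle\psi_0|$, canonical Kraus operators $\Upsilon_k(\theta)$, output state $\rho_{out}(\theta)$, SLD quantum information $H(\theta)$ of the family $\rho_{out}(\theta)$, and Sarovar–Milburn bound $C_\Upsilon(\theta)=4\sum_k \mathrm{tr}\{\Upsilon_k'(\theta)\rho_0\Upsilon_k'(\theta)^\dagger\}$ (all as defined in the context). Then $H(\theta)\le C_\Upsilon(\theta)$.
   Context: A one-parameter quantum channel is a map $\rho_0\mapsto\sum_k E_k(\theta)\rho_0E_k(\theta)^\dagger$ on density matrices on $\mathbb{C}^d$, with Kraus operators $E_k(\theta)$ depending differentiably on a real parameter $\theta$ and $\sum_k E_k(\theta)^\dagger E_k(\theta)=I$. The input state is a fixed, completely known pure state $\rho_0=|\psi_0\rangle\langle\psi_0|$. The canonical Kraus operators $\{\Upsilon_k(\theta)\}_{k=1}^d$ form a (differentiable) Kraus representation of the same channel satisfying $\mathrm{tr}\{\Upsilon_k(\theta)\rho_0\Upsilon_j(\theta)^\dagger\}=\delta_{jk}p_k(\theta)$ for all $j,k$. The output state is then $\rho_{out}(\theta)=\sum_k p_k(\theta)|w_k(\theta)\rangle\langle w_k(\theta)|$, where $\{|w_k(\theta)\rangle\}_{k=1}^d$ is an orthonormal basis depending differentiably on $\theta$ with $|w_k\rangle=p_k^{-1/2}\Upsilon_k|\psi_0\rangle$ whenever $p_k>0$. A prime denotes $d/d\theta$. The SLD quantum information is $H(\theta)=\mathrm{tr}\{\rho_{out}(\theta)\lambda(\theta)^2\}$,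 where $\lambda(\theta)$ is a self-adjoint solution of $\frac{d\rho_{out}}{d\theta}=\frac12(\rho_{out}\lambda+\lambda\rho_{out})$. *)

theory Defs
  imports "HOL-Analysis.Analysis"
begin

text \<open>Matrices on C^d are complex^'n^'n with d = CARD('n); vectors are complex^'n.\<close>

definition adj :: "complex^'n^'m \<Rightarrow> complex^'m^'n" where
  "adj A = (\<chi> i j. cnj (A $ j $ i))"

definition ket_bra :: "complex^'n \<Rightarrow> complex^'n \<Rightarrow> complex^'n^'n" where
  "ket_bra u v = (\<chi> i j. u $ i * cnj (v $ j))"

definition cinner :: "complex^'n \<Rightarrow> complex^'n \<Rightarrow> complex" where
  "cinner u v = (\<Sum>i\<in>UNIV. cnj (u $ i) * v $ i)"

definition channel :: "('k::finite \<Rightarrow> complex^'n^'n) \<Rightarrow> complex^'n^'n \<Rightarrow> complex^'n^'n" where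
  "channel K rho = (\<Sum>k\<in>UNIV. K k ** rho ** adj (K k))"

end

theory Submission
  imports Defs "HOL-Analysis.Analysis"
begin

lemma mult_ketbra: "A ** ket_bra x y = ket_bra (A *v x) (y::complex^'n)"
  unfolding ket_bra_def matrix_matrix_mult_def matrix_vector_mult_def
  by (simp add: vec_eq_iff sum_distrib_right mult.assoc)

lemma trace_ketbra0: "trace (ket_bra a b ** M) = cinner b (M *v (a::complex^'n))"
proof -
  have "trace (ket_bra a b ** M) = (\<Sum>i\<in>UNIV. \<Sum>j\<in>UNIV. a $ i * cnj (b $ j) * M $ j $ i)"
    unfolding trace_def ket_bra_def matrix_matrix_mult_def by simp
  also have "\<dots> = (\<Sum>j\<in>UNIV. \<Sum>i\<in>UNIV. a $ i * cnj (b $ j) * M $ j $ i)"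
    by (rule sum.swap)
  also have "\<dots> = (\<Sum>j\<in>UNIV. cnj (b $ j) * (\<Sum>i\<in>UNIV. M $ j $ i * a $ i))"
    by (rule sum.cong[OF refl]) (simp add: sum_distrib_left mult_ac)
  also have "\<dots> = cinner b (M *v a)"
    unfolding cinner_def matrix_vector_mult_def by simp
  finally show ?thesis .
qed

lemma trace_ketbra: "trace ((A::complex^'n^'n) ** ket_bra x x ** M) = cinner x (M *v (A *v (x::complex^'n)))"
  by (simp only: mult_ketbra trace_ketbra0)

lemma cinner_adj: "cinner x (adj B *v w) = cinner (B *v x) (w::complex^'n)"
proof -
  have "cinner x (adj B *v w) = (\<Sum>i\<in>UNIV. \<Sum>j\<in>UNIV. cnj (x $ i) * (cnj (B $ j $ i) * w $ j))"
    unfolding cinner_def adj_def matrix_vector_mult_def by (simp add: sum_distrib_left)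
  also have "\<dots> = (\<Sum>j\<in>UNIV. \<Sum>i\<in>UNIV. cnj (x $ i) * (cnj (B $ j $ i) * w $ j))"
    by (rule sum.swap)
  also have "\<dots> = cinner (B *v x) w"
    unfolding cinner_def matrix_vector_mult_def by (simp add: sum_distrib_left sum_distrib_right mult_ac)
  finally show ?thesis .
qed

lemma Re_cinner: "Re (cinner u v) = u \<bullet> (v::complex^'n)"
  unfolding cinner_def inner_vec_def inner_complex_def by (simp add: Re_sum)

lemma cinner_selfadj: assumes "adj L = L" shows "cinner u (L *v v) = cinner (L *v u) (v::complex^'n)"
  using cinner_adj[of u L v] unfolding assms .

lemma cscale: "r *\<^sub>R (z::complex) = of_real r * z" by (simp add: scaleR_conv_of_real)

lemma trace_expand: "trace (M ** L) = (\<Sum>i\<in>UNIV. \<Sum>j\<in>UNIV. M $ i $ j * (L::complex^'n^'n) $ j $ i)"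
  unfolding trace_def matrix_matrix_mult_def by simp

lemma lin1c: "bounded_linear (\<lambda>M::complex^'n^'n. trace (M ** L))"
  apply (subst linear_conv_bounded_linear[symmetric])
  apply (rule linearI)
  unfolding trace_expand
   apply (simp add: distrib_right sum.distrib)
  apply (simp add: cscale sum_distrib_left mult.assoc)
  done

lemma lin1: "bounded_linear (\<lambda>M::complex^'n^'n. Re (trace (M ** L)))"
  by (rule bounded_linear_compose[OF bounded_linear_Re lin1c])

lemma lin2: "bounded_linear (\<lambda>M::complex^'n^'n. M *v x)"
  apply (subst linear_conv_bounded_linear[symmetric])
  apply (rule linearI)
  unfolding matrix_vector_mult_def
  by (simp_all add: vec_eq_iff sum.distrib distrib_right distrib_left cscale sum_distrib_left mult_ac)

lemma trace_sum: "trace ((\<Sum>k\<in>(S::'k set). M k) ** L) = (\<Sum>k\<in>S. trace (M k ** (L::complex^'n^'n)))"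
  unfolding trace_def matrix_matrix_mult_def
  by (simp add: sum_distrib_right sum.swap[of _ S])

lemma lin3: "bounded_linear (\<lambda>x::complex^'n. (L::complex^'n^'n) *v x)"
  apply (subst linear_conv_bounded_linear[symmetric])
  apply (rule linearI)
  unfolding matrix_vector_mult_def
  by (simp_all add: vec_eq_iff sum.distrib distrib_left cscale sum_distrib_left mult_ac)

lemma inner_selfadj: assumes "adj L = L" shows "u \<bullet> (L *v v) = (L *v u) \<bullet> (v::complex^'n)"
proof -
  have "Re (cinner u (L *v v)) = Re (cinner (L *v u) v)"
    using cinner_selfadj[OF assms, of u v] by (rule arg_cong)
  then show ?thesis unfolding Re_cinner .
qed

lemma trace_conj: "trace ((A::complex^'n^'n) ** ket_bra x x ** adj A ** M) = cinner (A *v x) (M *v (A *v (x::complex^'n)))"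
proof -
  have "trace (A ** ket_bra x x ** adj A ** M) = trace (A ** ket_bra x x ** (adj A ** M))"
    by (simp only: matrix_mul_assoc)
  also have "\<dots> = cinner x ((adj A ** M) *v (A *v x))"
    by (rule trace_ketbra)
  also have "\<dots> = cinner x (adj A *v (M *v (A *v x)))"
    by (simp only: matrix_vector_mul_assoc[symmetric])
  also have "\<dots> = cinner (A *v x) (M *v (A *v x))"
    by (rule cinner_adj)
  finally show ?thesis .
qed

theorem lemma1:
  fixes E :: "'k::finite \<Rightarrow> real \<Rightarrow> complex^'n^'n"
    and Ups Ups' :: "'n \<Rightarrow> real \<Rightarrow> complex^'n^'n"
    and psi0 :: "complex^'n"
    and w :: "'n \<Rightarrow> real \<Rightarrow> complex^'n"
    and L :: "complex^'n^'n"
    and \<theta> :: real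
  assumes E_diff: "\<And>k t. E k differentiable (at t)"
    and E_kraus: "\<And>t. (\<Sum>k\<in>UNIV. adj (E k t) ** E k t) = mat 1"
    and Ups_deriv: "\<And>k t. (Ups k has_vector_derivative Ups' k t) (at t)"
    and same_channel: "\<And>t rho. channel (\<lambda>k. Ups k t) rho = channel (\<lambda>k. E k t) rho"
    and psi0_unit: "norm psi0 = 1"
    and canonical: "\<And>t j k. j \<noteq> k \<Longrightarrow>
          trace (Ups k t ** ket_bra psi0 psi0 ** adj (Ups j t)) = 0"
    and w_orthonormal: "\<And>t j k. cinner (w j t) (w k t) = (if j = k then 1 else 0)"
    and w_diff: "\<And>k t. w k differentiable (at t)"
    and w_def: "\<And>k t. Re (trace (Ups k t ** ket_bra psi0 psi0 ** adj (Ups k t))) > 0 \<Longrightarrow>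
          w k t = (1 / sqrt (Re (trace (Ups k t ** ket_bra psi0 psi0 ** adj (Ups k t)))))
                    *\<^sub>R (Ups k t *v psi0)"
    and L_selfadj: "adj L = L"
    and SLD: "((\<lambda>t. channel (\<lambda>k. E k t) (ket_bra psi0 psi0)) has_vector_derivative
               ((1/2) *\<^sub>R (channel (\<lambda>k. E k \<theta>) (ket_bra psi0 psi0) ** L
                          + L ** channel (\<lambda>k. E k \<theta>) (ket_bra psi0 psi0)))) (at \<theta>)"
  shows "Re (trace (channel (\<lambda>k. E k \<theta>) (ket_bra psi0 psi0) ** L ** L))
         \<le> 4 * Re (\<Sum>k\<in>UNIV. trace (Ups' k \<theta> ** ket_bra psi0 psi0 ** adj (Ups' k \<theta>)))"
  proof -
  define P where "P = ket_bra psi0 psi0"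
  define v where "v k t = Ups k t *v psi0" for k t
  define u where "u k = Ups' k \<theta> *v psi0" for k
  define R where "R = channel (\<lambda>k. E k \<theta>) P"
  define f where "f t = Re (trace (channel (\<lambda>k. E k t) P ** L))" for t
  define H where "H = Re (trace (R ** L ** L))"
  have f1: "(f has_vector_derivative Re (trace (((1/2) *\<^sub>R (R ** L + L ** R)) ** L))) (at \<theta>)"
    unfolding f_def R_def P_def
    by (rule bounded_linear.has_vector_derivative[OF lin1 SLD])
  have D1: "Re (trace (((1/2) *\<^sub>R (R ** L + L ** R)) ** L)) = H"
  proof -
    have t: "trace (L ** R ** L) = trace (R ** L ** L)"
    proof -
      have "trace (L ** R ** L) = trace (L ** (R ** L))" by (simp only: matrix_mul_assoc)
      also have "\<dots> = trace ((R ** L) ** L)" by (rule trace_mul_sym)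
      finally show ?thesis .
    qed
    have a: "Re (trace (((1/2) *\<^sub>R (R ** L + L ** R)) ** L)) = (1/2) *\<^sub>R Re (trace ((R ** L + L ** R) ** L))"
      by (rule linear_cmul[OF bounded_linear.linear[OF lin1]])
    have b: "Re (trace ((R ** L + L ** R) ** L)) = Re (trace (R ** L ** L)) + Re (trace (L ** R ** L))"
      by (rule linear_add[OF bounded_linear.linear[OF lin1]])
    show ?thesis unfolding a b t H_def by simp
  qed
  have feq: "f t = (\<Sum>k\<in>UNIV. v k t \<bullet> (L *v v k t))" for t
  proof -
    have "f t = Re (trace ((\<Sum>k\<in>UNIV. Ups k t ** P ** adj (Ups k t)) ** L))"
      unfolding f_def same_channel[symmetric] channel_def ..
    also have "\<dots> = (\<Sum>k\<in>UNIV. Re (trace (Ups k t ** P ** adj (Ups k t) ** L)))"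
      by (simp only: trace_sum Re_sum)
    also have "\<dots> = (\<Sum>k\<in>UNIV. v k t \<bullet> (L *v v k t))"
      unfolding P_def trace_conj Re_cinner v_def ..
    finally show ?thesis .
  qed
  have dv: "(v k has_derivative (\<lambda>h. h *\<^sub>R u k)) (at \<theta>)" for k
    using bounded_linear.has_vector_derivative[OF lin2[of psi0] Ups_deriv[of k \<theta>]]
    unfolding v_def u_def has_vector_derivative_def by simp
  have dLv: "((\<lambda>t. L *v v k t) has_derivative (\<lambda>h. L *v (h *\<^sub>R u k))) (at \<theta>)" for k
    by (rule bounded_linear.has_derivative[OF lin3 dv])
  have f2: "(f has_derivative (\<lambda>h. \<Sum>k\<in>UNIV. v k \<theta> \<bullet> (L *v (h *\<^sub>R u k)) + (h *\<^sub>R u k) \<bullet> (L *v v k \<theta>))) (at \<theta>)"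
    unfolding feq[abs_def]
    by (intro has_derivative_sum has_derivative_inner dv dLv)
  have f1': "(f has_derivative (\<lambda>h. h *\<^sub>R H)) (at \<theta>)"
    using f1 D1 unfolding has_vector_derivative_def by simp
  have "(\<lambda>h. h *\<^sub>R H) = (\<lambda>h. \<Sum>k\<in>UNIV. v k \<theta> \<bullet> (L *v (h *\<^sub>R u k)) + (h *\<^sub>R u k) \<bullet> (L *v v k \<theta>))"
    using has_derivative_unique[OF f1' f2] .
  from fun_cong[OF this, of 1]
  have "H = (\<Sum>k\<in>UNIV. v k \<theta> \<bullet> (L *v u k) + u k \<bullet> (L *v v k \<theta>))"
    by simp
  also have "\<dots> = (\<Sum>k\<in>UNIV. 2 * ((L *v v k \<theta>) \<bullet> u k))"
  proof (rule sum.cong)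
    fix k
    have a: "v k \<theta> \<bullet> (L *v u k) = (L *v v k \<theta>) \<bullet> u k" by (rule inner_selfadj[OF L_selfadj])
    have b: "u k \<bullet> (L *v v k \<theta>) = (L *v v k \<theta>) \<bullet> u k" by (rule inner_commute)
    show "v k \<theta> \<bullet> (L *v u k) + u k \<bullet> (L *v v k \<theta>) = 2 * ((L *v v k \<theta>) \<bullet> u k)"
      unfolding a b by simp
  qed simp
  finally have Hsum: "H = (\<Sum>k\<in>UNIV. 2 * ((L *v v k \<theta>) \<bullet> u k))" .
  have Hsq: "H = (\<Sum>k\<in>UNIV. (L *v v k \<theta>) \<bullet> (L *v v k \<theta>))"
  proof -
    have "H = Re (trace (R ** (L ** L)))" unfolding H_def by (simp only: matrix_mul_assoc)
    also have "\<dots> = Re (trace ((\<Sum>k\<in>UNIV. Ups k \<theta> ** P ** adj (Ups k \<theta>)) ** (L ** L)))"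
      unfolding R_def same_channel[symmetric] channel_def ..
    also have "\<dots> = (\<Sum>k\<in>UNIV. Re (trace (Ups k \<theta> ** P ** adj (Ups k \<theta>) ** (L ** L))))"
      by (simp only: trace_sum Re_sum)
    also have "\<dots> = (\<Sum>k\<in>UNIV. v k \<theta> \<bullet> ((L ** L) *v v k \<theta>))"
      unfolding P_def trace_conj Re_cinner v_def ..
    also have "\<dots> = (\<Sum>k\<in>UNIV. (L *v v k \<theta>) \<bullet> (L *v v k \<theta>))"
    proof (rule sum.cong)
      fix k
      have "v k \<theta> \<bullet> ((L ** L) *v v k \<theta>) = v k \<theta> \<bullet> (L *v (L *v v k \<theta>))"
        by (simp only: matrix_vector_mul_assoc[symmetric])
      also have "\<dots> = (L *v v k \<theta>) \<bullet> (L *v v k \<theta>)"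
        by (rule inner_selfadj[OF L_selfadj])
      finally show "v k \<theta> \<bullet> ((L ** L) *v v k \<theta>) = (L *v v k \<theta>) \<bullet> (L *v v k \<theta>)" .
    qed (rule refl)
    finally show ?thesis .
  qed
  have S: "Re (\<Sum>k\<in>UNIV. trace (Ups' k \<theta> ** ket_bra psi0 psi0 ** adj (Ups' k \<theta>))) = (\<Sum>k\<in>UNIV. u k \<bullet> u k)"
  proof -
    have "trace (Ups' k \<theta> ** ket_bra psi0 psi0 ** adj (Ups' k \<theta>)) = cinner (u k) (u k)" for k
      unfolding trace_ketbra cinner_adj u_def ..
    then show ?thesis by (simp only: Re_sum Re_cinner)
  qed
  have ineq: "4 * (a \<bullet> b) \<le> a \<bullet> a + 4 * (b \<bullet> b)" for a b :: "complex^'n"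
  proof -
    have "0 \<le> (a - 2 *\<^sub>R b) \<bullet> (a - 2 *\<^sub>R b)" by (rule inner_ge_zero)
    also have "(a - 2 *\<^sub>R b) \<bullet> (a - 2 *\<^sub>R b) = a \<bullet> a - 4 * (a \<bullet> b) + 4 * (b \<bullet> b)"
      by (simp add: inner_diff_left inner_diff_right inner_commute[of b a])
    finally show ?thesis by simp
  qed
  have "2 * H \<le> H + 4 * (\<Sum>k\<in>UNIV. u k \<bullet> u k)"
  proof -
    have "2 * H = (\<Sum>k\<in>UNIV. 4 * ((L *v v k \<theta>) \<bullet> u k))"
      by (simp add: Hsum sum_distrib_left)
    also have "\<dots> \<le> (\<Sum>k\<in>UNIV. (L *v v k \<theta>) \<bullet> (L *v v k \<theta>) + 4 * (u k \<bullet> u k))"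
      by (rule sum_mono) (rule ineq)
    also have "\<dots> = H + 4 * (\<Sum>k\<in>UNIV. u k \<bullet> u k)"
      by (simp add: Hsq sum.distrib sum_distrib_left)
    finally show ?thesis .
  qed
  then show ?thesis using S unfolding H_def R_def P_def by simp
qed

end
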